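(* Let $D\subset\mathbb R^m$ be open, let $Y$ be a smooth autonomous vector field on $D$ with flow $\Phi^\tau$, and let $n\in\mathbb N$. Let $X_n(x,\epsilon)$ be the interpolating vector field of the near-identity map $\Phi^\epsilon$. Then $$Y(x)=X_n(x,\epsilon)+O(\epsilon^{2n})\quad\text{as }\epsilon\to0,$$ uniformly for $x$ in every compact subset of $D$.
   Context: For $\epsilon\neq0$ and a point $x$ whose iterates $x_k=(\Phi^\epsilon)^k(x)=\Phi^{k\epsilon}(x)$, $|k|\le n$, are defined, the interpolating vector field is $$X_n(x,\epsilon)=\epsilon^{-1}\sum_{k=1}^n p_{nk}\bigl(x_k-x_{-k}\bigr),\qquad p_{nk}=\frac{(-1)^{k+1}(n!)^2}{k(n+k)!(n-k)!};$$ equivalently, it is the $t$-derivative at $t=0$ of the unique polynomial of degree $2n$ in $t$ taking the value $x_k$ at $t=k\epsilon$ for all integers $|k|\le n$. *)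

theory Defs
  imports "HOL-Analysis.Analysis"
begin

text \<open>C^k on an open set, via iterated directional derivatives
  (for finite-dimensional domains this is the usual notion of k times
  continuously (Frechet) differentiable).\<close>
fun Ck_on :: "nat \<Rightarrow> 'a::euclidean_space set \<Rightarrow> ('a \<Rightarrow> 'b::real_normed_vector) \<Rightarrow> bool" where
  "Ck_on 0 S f = continuous_on S f"
| "Ck_on (Suc k) S f =
     (\<exists>f'. (\<forall>x\<in>S. (f has_derivative f' x) (at x)) \<and> (\<forall>v. Ck_on k S (\<lambda>x. f' x v)))"

definition smooth_on :: "'a::euclidean_space set \<Rightarrow> ('a \<Rightarrow> 'b::real_normed_vector) \<Rightarrow> bool" where
  "smooth_on S f \<longleftrightarrow> (\<forall>k. Ck_on k S f)"

text \<open>Phi is the (maximal) flow of the autonomous vector field Y on D, with flow domain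
  Omega in R x D: Phi t x is defined iff (t,x) is in Omega.\<close>
definition is_flow ::
  "('a::euclidean_space \<Rightarrow> 'a) \<Rightarrow> 'a set \<Rightarrow> (real \<Rightarrow> 'a \<Rightarrow> 'a) \<Rightarrow> (real \<times> 'a) set \<Rightarrow> bool" where
  "is_flow Y D Phi Omega \<longleftrightarrow>
     open Omega \<and> Omega \<subseteq> UNIV \<times> D \<and>
     (\<forall>x\<in>D. (0, x) \<in> Omega \<and> is_interval {t. (t, x) \<in> Omega} \<and> Phi 0 x = x) \<and>
     (\<forall>t x. (t, x) \<in> Omega \<longrightarrow>
        Phi t x \<in> D \<and> ((\<lambda>s. Phi s x) has_vector_derivative Y (Phi t x)) (at t)) \<and>
     (\<forall>x\<in>D. \<forall>J \<phi>. is_interval J \<and> 0 \<in> J \<and> \<phi> 0 = x \<and>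
        (\<forall>t\<in>J. \<phi> t \<in> D \<and> (\<phi> has_vector_derivative Y (\<phi> t)) (at t within J))
        \<longrightarrow> J \<subseteq> {t. (t, x) \<in> Omega})"

definition interp_coeff :: "nat \<Rightarrow> nat \<Rightarrow> real" where
  "interp_coeff n k = (-1) ^ (k + 1) * (fact n)^2 / (real k * fact (n + k) * fact (n - k))"

definition interp_field :: "(real \<Rightarrow> 'a \<Rightarrow> 'a::real_vector) \<Rightarrow> nat \<Rightarrow> 'a \<Rightarrow> real \<Rightarrow> 'a" where
  "interp_field Phi n x \<epsilon> =
     (1 / \<epsilon>) *\<^sub>R (\<Sum>k=1..n. interp_coeff n k *\<^sub>R (Phi (real k * \<epsilon>) x - Phi (- (real k * \<epsilon>)) x))"

end

theory Submission
  imports Defs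
begin


lemma Ck_cong:
  assumes "open S" "\<And>x. x \<in> S \<Longrightarrow> f x = g x" "Ck_on k S f"
  shows "Ck_on k S g"
  using assms
proof (induction k arbitrary: f g)
  case 0 then show ?case using continuous_on_cong by auto
next
  case (Suc k)
  then obtain f' where f': "\<forall>x\<in>S. (f has_derivative f' x) (at x)" "\<forall>v. Ck_on k S (\<lambda>x. f' x v)" by auto
  have "\<forall>x\<in>S. (g has_derivative f' x) (at x)"
    using f'(1) Suc.prems has_derivative_transform_within_open by blast
  then show ?case using f'(2) by auto
qed

lemma Ck_mono: "Ck_on (Suc k) S f \<Longrightarrow> Ck_on k S f"
proof (induction k arbitrary: f)
  case 0
  then obtain f' where "\<forall>x\<in>S. (f has_derivative f' x) (at x)" by auto
  then show ?case
    by (simp, meson continuous_at_imp_continuous_on has_derivative_continuous)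
next
  case (Suc k)
  then obtain f' where f': "\<forall>x\<in>S. (f has_derivative f' x) (at x)" "\<forall>v. Ck_on (Suc k) S (\<lambda>x. f' x v)"
    by (metis Ck_on.simps(2))
  then show ?case using Suc.IH by auto
qed

lemma Ck_const: "Ck_on k S (\<lambda>x. c)"
proof (induction k arbitrary: c)
  case 0 then show ?case by simp
next
  case (Suc k)
  show ?case unfolding Ck_on.simps by (rule exI[of _ "\<lambda>x v. 0"]) (auto simp: Suc.IH)
qed

lemma Ck_add: "Ck_on k S f \<Longrightarrow> Ck_on k S g \<Longrightarrow> Ck_on k S (\<lambda>x. f x + g x)"
proof (induction k arbitrary: f g)
  case 0 then show ?case by (simp add: continuous_on_add)
next
  case (Suc k)
  obtain f' where f': "\<forall>x\<in>S. (f has_derivative f' x) (at x)" "\<forall>v. Ck_on k S (\<lambda>x. f' x v)" using Suc.prems by auto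
  obtain g' where g': "\<forall>x\<in>S. (g has_derivative g' x) (at x)" "\<forall>v. Ck_on k S (\<lambda>x. g' x v)" using Suc.prems by auto
  show ?case unfolding Ck_on.simps
    by (rule exI[of _ "\<lambda>x v. f' x v + g' x v"]) (use f' g' Suc.IH in \<open>auto intro: has_derivative_add\<close>)
qed

lemma Ck_sum: "finite I \<Longrightarrow> (\<And>i. i \<in> I \<Longrightarrow> Ck_on k S (f i)) \<Longrightarrow> Ck_on k S (\<lambda>x. \<Sum>i\<in>I. f i x)"
  by (induction I rule: finite_induct) (auto intro: Ck_add Ck_const)

lemma Ck_linear: "bounded_linear L \<Longrightarrow> Ck_on k S f \<Longrightarrow> Ck_on k S (\<lambda>x. L (f x))"
proof (induction k arbitrary: f)
  case 0 then show ?case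
    using continuous_on_compose2[of UNIV L S f] linear_continuous_on by (auto simp: bounded_linear.linear)
next
  case (Suc k)
  obtain f' where f': "\<forall>x\<in>S. (f has_derivative f' x) (at x)" "\<forall>v. Ck_on k S (\<lambda>x. f' x v)" using Suc.prems by auto
  show ?case unfolding Ck_on.simps
    by (rule exI[of _ "\<lambda>x v. L (f' x v)"]) (use f' Suc in \<open>auto intro: bounded_linear.has_derivative\<close>)
qed

lemma Ck_scale: "Ck_on k S (a::_\<Rightarrow>real) \<Longrightarrow> Ck_on k S g \<Longrightarrow> Ck_on k S (\<lambda>x. a x *\<^sub>R g x)"
proof (induction k arbitrary: a g)
  case 0 then show ?case by (simp add: continuous_on_scaleR)
next
  case (Suc k)
  obtain f' where f': "\<forall>x\<in>S. (a has_derivative f' x) (at x)" "\<forall>v. Ck_on k S (\<lambda>x. f' x v)" using Suc.prems by auto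
  obtain g' where g': "\<forall>x\<in>S. (g has_derivative g' x) (at x)" "\<forall>v. Ck_on k S (\<lambda>x. g' x v)" using Suc.prems by auto
  have a: "Ck_on k S a" and g: "Ck_on k S g" using Suc.prems Ck_mono by auto
  show ?case unfolding Ck_on.simps
    apply (rule exI[of _ "\<lambda>x v. a x *\<^sub>R g' x v + f' x v *\<^sub>R g x"])
    using f' g' Suc.IH a g by (auto intro!: has_derivative_scaleR Ck_add)
qed

lemma Ck_ident: "Ck_on k S (\<lambda>x. x)"
proof (cases k)
  case 0 then show ?thesis by (simp add: continuous_on_id)
next
  case (Suc k')
  show ?thesis unfolding Suc Ck_on.simps
    by (rule exI[of _ "\<lambda>x v. v"]) (auto simp: Ck_const)
qed

definition dY :: "('a::euclidean_space \<Rightarrow> 'a) \<Rightarrow> ('a \<Rightarrow> 'b::real_normed_vector) \<Rightarrow> 'a \<Rightarrow> 'b" where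
  "dY Y g = (\<lambda>y. frechet_derivative g (at y) (Y y))"

fun Fs :: "('a::euclidean_space \<Rightarrow> 'a) \<Rightarrow> nat \<Rightarrow> 'a \<Rightarrow> 'a" where
  "Fs Y 0 = (\<lambda>x. x)"
| "Fs Y (Suc j) = dY Y (Fs Y j)"

lemma smooth_dY:
  assumes D: "open D" and Y: "smooth_on D Y" and g: "smooth_on D g"
  shows "smooth_on D (dY Y g)"
  unfolding smooth_on_def
proof
  fix k
  obtain f' where f': "\<forall>x\<in>D. (g has_derivative f' x) (at x)" "\<forall>v. Ck_on k D (\<lambda>x. f' x v)"
    using g unfolding smooth_on_def by (metis Ck_on.simps(2))
  have eq: "(\<Sum>i\<in>Basis. (Y y \<bullet> i) *\<^sub>R f' y i) = dY Y g y" if "y \<in> D" for y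
  proof -
    have lin: "linear (f' y)" using f'(1) that has_derivative_linear by blast
    have "dY Y g y = f' y (Y y)" unfolding dY_def using f'(1) that frechet_derivative_at by metis
    also have "\<dots> = f' y (\<Sum>i\<in>Basis. (Y y \<bullet> i) *\<^sub>R i)" by (simp add: euclidean_representation)
    also have "\<dots> = (\<Sum>i\<in>Basis. (Y y \<bullet> i) *\<^sub>R f' y i)"
      by (simp add: linear_sum[OF lin] linear_scale[OF lin])
    finally show ?thesis by simp
  qed
  have "Ck_on k D (\<lambda>y. \<Sum>i\<in>Basis. (Y y \<bullet> i) *\<^sub>R f' y i)"
    apply (rule Ck_sum, simp)
    apply (rule Ck_scale)
     apply (rule Ck_linear[where L="\<lambda>v. v \<bullet> _"])
    using Y f'(2) by (auto simp: smooth_on_def bounded_linear_inner_left)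
  then show "Ck_on k D (dY Y g)" using Ck_cong[OF D, of "\<lambda>y. \<Sum>i\<in>Basis. (Y y \<bullet> i) *\<^sub>R f' y i" "dY Y g"] eq by blast
qed

lemma smooth_Fs: "open D \<Longrightarrow> smooth_on D Y \<Longrightarrow> smooth_on D (Fs Y j)"
proof (induction j)
  case 0 then show ?case by (simp add: smooth_on_def Ck_ident)
next
  case (Suc j) then show ?case using smooth_dY by simp
qed

lemma Fs_1: "Fs Y (Suc 0) = Y"
  by (simp add: dY_def)

lemma Fs_deriv:
  assumes "open D" "smooth_on D Y" "y \<in> D"
  shows "(Fs Y j has_derivative frechet_derivative (Fs Y j) (at y)) (at y)"
proof -
  have "Ck_on (Suc 0) D (Fs Y j)" using smooth_Fs[OF assms(1,2)] smooth_on_def by blast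
  then obtain f' where "(Fs Y j has_derivative f' y) (at y)" using assms(3) by auto
  then show ?thesis using frechet_derivative_works differentiableI by blast
qed

lemma Fs_time_deriv:
  assumes D: "open D" "smooth_on D Y" and fl: "is_flow Y D Phi Omega" and tx: "(t, x) \<in> Omega"
  shows "((\<lambda>s. Fs Y j (Phi s x)) has_vector_derivative Fs Y (Suc j) (Phi t x)) (at t)"
proof -
  have inD: "Phi t x \<in> D" and ph: "((\<lambda>s. Phi s x) has_vector_derivative Y (Phi t x)) (at t)"
    using fl tx unfolding is_flow_def by auto
  let ?F = "frechet_derivative (Fs Y j) (at (Phi t x))"
  have d: "(Fs Y j has_derivative ?F) (at (Phi t x))" by (rule Fs_deriv[OF D inD])
  have lin: "linear ?F" using d has_derivative_linear by blast
  have "((\<lambda>s. Fs Y j (Phi s x)) has_derivative (\<lambda>h. ?F (h *\<^sub>R Y (Phi t x)))) (at t)"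
    using has_derivative_compose[OF ph[unfolded has_vector_derivative_def] d] by (simp add: o_def)
  then show ?thesis unfolding has_vector_derivative_def
    by (simp add: linear_scale[OF lin] dY_def)
qed



lemma alt_poly: "d < N \<Longrightarrow> (\<Sum>j\<le>N. (-1)^j * real (N choose j) * (real j + c)^d) = 0"
proof (induction d arbitrary: N c)
  case 0 then show ?case using choose_alternating_sum[of N, where 'a=real] by simp
next
  case (Suc d)
  then obtain M where N: "N = Suc M" and dM: "d < M" by (cases N) auto
  have A: "(\<Sum>j\<le>N. (-1)^j * real (N choose j) * (c * (real j + c)^d)) = 0"
    using Suc.IH[of N c] Suc.prems by (simp add: sum_distrib_left[symmetric] mult.left_commute)
  have "(\<Sum>j\<le>N. (-1)^j * real (N choose j) * (real j * (real j + c)^d))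
      = (\<Sum>i\<le>M. (-1)^(Suc i) * real (N choose Suc i) * (real (Suc i) * (real (Suc i) + c)^d))"
    unfolding N by (subst sum.atMost_Suc_shift) simp
  also have "\<dots> = (\<Sum>i\<le>M. - real N * ((-1)^i * real (M choose i) * (real i + (c+1))^d))"
  proof (rule sum.cong[OF refl])
    fix i
    have "real (N choose Suc i) * real (Suc i) = real N * real (M choose i)"
      unfolding N using Suc_times_binomial_eq[of M i] by (metis of_nat_mult)
    then show "(-1)^(Suc i) * real (N choose Suc i) * (real (Suc i) * (real (Suc i) + c)^d)
       = - real N * ((-1)^i * real (M choose i) * (real i + (c+1))^d)"
    proof -
      have "(-1::real)^(Suc i) = - ((-1)^i)" by simp
      then show ?thesis using \<open>real (N choose Suc i) * real (Suc i) = real N * real (M choose i)\<close>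
        by (simp only: of_nat_Suc) (smt (verit) mult.assoc mult.commute add.commute add.assoc mult_minus_left)
    qed
  qed
  also have "\<dots> = - real N * (\<Sum>i\<le>M. (-1)^i * real (M choose i) * (real i + (c+1))^d)"
    by (simp add: sum_distrib_left)
  also have "\<dots> = 0" using Suc.IH[of M "c+1"] dM by simp
  finally have B: "(\<Sum>j\<le>N. (-1)^j * real (N choose j) * (real j * (real j + c)^d)) = 0" .
  have "(\<Sum>j\<le>N. (-1)^j * real (N choose j) * (real j + c)^Suc d)
     = (\<Sum>j\<le>N. (-1)^j * real (N choose j) * (real j * (real j + c)^d))
       + (\<Sum>j\<le>N. (-1)^j * real (N choose j) * (c * (real j + c)^d))"
    by (simp add: sum.distrib[symmetric] algebra_simps)
  then show ?case using A B by simp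
qed



lemma split_center:
  fixes f :: "nat \<Rightarrow> real"
  shows "(\<Sum>j\<le>2*n. f j) = f n + (\<Sum>k=1..n. f (n+k) + f (n-k))"
proof -
  have u: "{..2*n} = {..<n} \<union> {n} \<union> {n+1..2*n}" by auto
  have "(\<Sum>j\<le>2*n. f j) = (\<Sum>j<n. f j) + f n + (\<Sum>j=n+1..2*n. f j)"
    unfolding u by (subst sum.union_disjoint, auto)+
  moreover have "(\<Sum>j=n+1..2*n. f j) = (\<Sum>k=1..n. f (n+k))"
    using sum.shift_bounds_cl_nat_ivl[of f 1 n n] by (simp add: add.commute mult_2)
  moreover have "(\<Sum>j<n. f j) = (\<Sum>k=1..n. f (n-k))"
    by (rule sum.reindex_bij_witness[of _ "\<lambda>k. n - k" "\<lambda>j. n - j"]) auto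
  ultimately show ?thesis by (simp add: sum.distrib)
qed

lemma coeff_identity:
  assumes "m < n"
  shows "2 * (\<Sum>k=1..n. interp_coeff n k * real k ^ (2*m+1)) = (if m = 0 then 1 else 0)"
proof -
  define f where "f j = (-1)^j * real ((2*n) choose j) * (real j + - real n)^(2*m)" for j
  have z: "(\<Sum>j\<le>2*n. f j) = 0" unfolding f_def by (rule alt_poly) (use assms in auto)
  define b where "b k = (-1::real)^k * real ((2*n) choose (n+k)) * real k ^ (2*m)" for k
  have fp: "f (n+k) = (-1)^n * b k" for k unfolding f_def b_def by (simp add: power_add)
  have fm: "f (n-k) = (-1)^n * b k" if "k \<in> {1..n}" for k
  proof -
    have c: "(2*n) choose (n-k) = (2*n) choose (n+k)"
      using that binomial_symmetric[of "n-k" "2*n"] by (simp add: algebra_simps)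
    have s1: "(-1::real)^(n-k) = (-1)^(n+k)"
    proof -
      have e: "n + k = (n - k) + 2*k" using that by auto
      have "(-1::real)^(n+k) = (-1)^(n-k) * ((-1)^2)^k" unfolding e power_add power_mult ..
      then show ?thesis by simp
    qed
    have s2: "real (n - k) + - real n = - real k" using that by auto
    show ?thesis unfolding f_def b_def c s1 s2 by (simp add: power_add)
  qed
  have f0: "f n = (-1)^n * real ((2*n) choose n) * 0^(2*m)" unfolding f_def by simp
  have "0 = (-1)^n * (real ((2*n) choose n) * 0^(2*m) + 2 * (\<Sum>k=1..n. b k))"
    using z split_center[of f n] fp fm f0 by (simp add: sum_distrib_left algebra_simps)
  then have e: "real ((2*n) choose n) * 0^(2*m) + 2 * (\<Sum>k=1..n. b k) = 0" by simp
  have cn: "real ((2*n) choose n) = fact (2*n) / (fact n)^2"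
    using binomial_fact[of n "2*n"] by (simp add: power2_eq_square mult_2)
  have ck: "interp_coeff n k * real k ^ (2*m+1) = - b k / real ((2*n) choose n)" if "k \<in> {1..n}" for k
  proof -
    have "real ((2*n) choose (n+k)) = fact (2*n) / (fact (n+k) * fact (n-k))"
      using binomial_fact[of "n+k" "2*n"] that by (simp add: mult_2)
    then show ?thesis using that unfolding interp_coeff_def b_def cn
      by (simp add: field_simps power_add)
  qed
  have pos: "real ((2*n) choose n) > 0" by simp
  have "2 * (\<Sum>k=1..n. interp_coeff n k * real k ^ (2*m+1)) = - 2 * (\<Sum>k=1..n. b k) / real ((2*n) choose n)"
    using ck by (simp add: sum_divide_distrib[symmetric] sum_negf)
  also have "\<dots> = 0^(2*m)" using e pos by (simp add: field_simps)
  finally show ?thesis by simp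
qed

lemma coeff_identity2:
  assumes "j \<le> 2*n"
  shows "(\<Sum>k=1..n. interp_coeff n k * (real k ^ j - (- real k) ^ j)) = (if j = 1 then 1 else 0)"
proof (cases "even j")
  case True
  then show ?thesis by (auto simp: power_minus_even)
next
  case False
  then obtain m where j: "j = 2*m+1" by (metis oddE)
  with assms have "m < n" by auto
  have "(\<Sum>k=1..n. interp_coeff n k * (real k ^ j - (- real k) ^ j)) = 2 * (\<Sum>k=1..n. interp_coeff n k * real k ^ (2*m+1))"
    using False j by (simp add: power_minus_odd sum_distrib_left algebra_simps)
  then show ?thesis using coeff_identity[OF \<open>m < n\<close>] j by auto
qed



lemma tube:
  assumes fl: "is_flow Y D Phi Omega" and K: "compact K" "K \<subseteq> D"
  obtains \<eta> where "\<eta> > 0" "\<And>x t. x \<in> K \<Longrightarrow> \<bar>t\<bar> < \<eta> \<Longrightarrow> (t, x) \<in> Omega"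
proof -
  have c: "compact ((\<lambda>x. (0::real, x)) ` K)"
    by (rule compact_continuous_image) (auto intro!: continuous_intros K)
  have o: "open Omega" and s: "(\<lambda>x. (0::real, x)) ` K \<subseteq> Omega" using fl K unfolding is_flow_def by auto
  obtain e where e: "e > 0" "(\<Union>p\<in>(\<lambda>x. (0::real, x)) ` K. ball p e) \<subseteq> Omega"
    using compact_subset_open_imp_ball_epsilon_subset[OF c o s] by blast
  show ?thesis
  proof (rule that[OF e(1)])
    fix x t assume "x \<in> K" "\<bar>t\<bar> < e"
    then have "(t, x) \<in> ball (0, x) e" by (simp add: dist_Pair_Pair dist_real_def)
    then show "(t, x) \<in> Omega" using e(2) \<open>x \<in> K\<close> by blast
  qed
qed

lemma stay:
  assumes fl: "is_flow Y D Phi Omega" and r: "r > 0"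
    and M: "\<And>y. y \<in> cball x r \<Longrightarrow> norm (Y y) \<le> M"
    and om: "\<And>s. \<bar>s\<bar> \<le> \<bar>t\<bar> \<Longrightarrow> (s, x) \<in> Omega"
    and Mt: "M * \<bar>t\<bar> < r" and x: "x \<in> D"
  shows "norm (Phi t x - x) < r"
proof (rule ccontr)
  assume neg: "\<not> norm (Phi t x - x) < r"
  let ?f = "\<lambda>s. Phi s x"
  have der: "(?f has_vector_derivative Y (Phi s x)) (at s)" if "\<bar>s\<bar> \<le> \<bar>t\<bar>" for s
    using fl om[OF that] unfolding is_flow_def by auto
  have seg: "\<bar>s\<bar> \<le> \<bar>t\<bar>" if "s \<in> closed_segment 0 t" for s
    using that by (auto simp: closed_segment_eq_real_ivl split: if_splits)
  have cont: "continuous_on (closed_segment 0 t) ?f"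
    using der seg by (meson continuous_at_imp_continuous_on has_vector_derivative_continuous)
  have Phi0: "Phi 0 x = x" using fl x unfolding is_flow_def by auto
  define A where "A = {s \<in> closed_segment 0 t. r \<le> norm (Phi s x - x)}"
  have clA: "closed A" unfolding A_def
    by (rule continuous_on_closed_Collect_le) (auto intro!: continuous_intros cont)
  have "A = closed_segment 0 t \<inter> A" by (auto simp: A_def)
  then have cA: "compact A" using clA compact_Int_closed[OF compact_segment clA] by metis
  have neA: "A \<noteq> {}" using neg unfolding A_def by auto
  obtain s0 where s0: "s0 \<in> A" "\<And>s. s \<in> A \<Longrightarrow> \<bar>s0\<bar> \<le> \<bar>s\<bar>"
    using continuous_attains_inf[OF cA neA, of abs] continuous_on_rabs[OF continuous_on_id] by auto
  have s0seg: "s0 \<in> closed_segment 0 t" and s0r: "r \<le> norm (Phi s0 x - x)" using s0(1) A_def by auto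
  have s0ne: "s0 \<noteq> 0" using s0r r Phi0 by auto
  have subseg: "closed_segment 0 s0 \<subseteq> closed_segment 0 t"
    using s0seg by (auto simp: closed_segment_eq_real_ivl split: if_splits)
  have small: "norm (Phi u x - x) \<le> r" if "u \<in> closed_segment 0 s0" for u
  proof -
    define C where "C = {u \<in> closed_segment 0 s0. norm (Phi u x - x) \<le> r}"
    have clC: "closed C" unfolding C_def
      by (rule continuous_on_closed_Collect_le) (auto intro!: continuous_intros continuous_on_subset[OF cont subseg])
    have "open_segment 0 s0 \<subseteq> C"
    proof
      fix v assume v: "v \<in> open_segment 0 s0"
      then have "\<bar>v\<bar> < \<bar>s0\<bar>" by (auto simp: open_segment_eq_real_ivl split: if_splits)
      moreover have "v \<in> closed_segment 0 s0" using v open_closed_segment by blast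
      ultimately show "v \<in> C" using s0(2)[of v] subseg unfolding C_def A_def by force
    qed
    then have "closure (open_segment 0 s0) \<subseteq> C" using clC closure_minimal by blast
    then show ?thesis using that s0ne unfolding C_def by auto
  qed
  have "norm (?f s0 - ?f 0) \<le> M * norm (s0 - 0)"
  proof (rule differentiable_bound[where f' = "\<lambda>u h. h *\<^sub>R Y (Phi u x)"])
    show "convex (closed_segment 0 s0)" by simp
    fix u assume u: "u \<in> closed_segment 0 s0"
    then have "\<bar>u\<bar> \<le> \<bar>t\<bar>" using seg subseg by blast
    then show "(?f has_derivative (\<lambda>h. h *\<^sub>R Y (Phi u x))) (at u within closed_segment 0 s0)"
      using der has_vector_derivative_def has_derivative_at_withinI by blast
    have "Phi u x \<in> cball x r" using small[OF u] by (simp add: dist_norm norm_minus_commute)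
    then show "onorm (\<lambda>h. h *\<^sub>R Y (Phi u x)) \<le> M"
      using M by (simp add: onorm_scaleR_left[OF bounded_linear_ident] onorm_id)
  qed auto
  moreover have "\<bar>s0\<bar> \<le> \<bar>t\<bar>" using seg s0seg by blast
  moreover have "M \<ge> 0" using M[of x] r by (meson centre_in_cball less_imp_le norm_ge_zero order_trans)
  ultimately have "norm (Phi s0 x - x) \<le> M * \<bar>t\<bar>" using Phi0
    by (smt (verit) mult_left_mono real_norm_def)
  then show False using s0r Mt by simp
qed



lemma taylor2:
  fixes g :: "real \<Rightarrow> real"
  assumes N: "N > 0" and d0: "diff 0 = g"
    and der: "\<And>m t. m < N \<Longrightarrow> \<bar>t\<bar> \<le> R \<Longrightarrow> DERIV (diff m) t :> diff (Suc m) t"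
    and s: "s \<noteq> 0" "\<bar>s\<bar> \<le> R"
  shows "\<exists>\<tau>. \<bar>\<tau>\<bar> \<le> \<bar>s\<bar> \<and> g s = (\<Sum>m<N. diff m 0 / fact m * s^m) + diff N \<tau> / fact N * s^N"
proof (cases "s > 0")
  case True
  have "\<forall>m t. m < N \<and> 0 \<le> t \<and> t \<le> s \<longrightarrow> DERIV (diff m) t :> diff (Suc m) t"
    using der s by auto
  from Taylor_up[OF N d0 this, of 0] True obtain t where "0 < t" "t < s"
    "g s = (\<Sum>m<N. diff m 0 / fact m * (s - 0)^m) + diff N t / fact N * (s - 0)^N" by auto
  then show ?thesis by (intro exI[of _ t]) auto
next
  case False
  then have sn: "s < 0" using s by auto
  have "\<forall>m t. m < N \<and> s \<le> t \<and> t \<le> 0 \<longrightarrow> DERIV (diff m) t :> diff (Suc m) t"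
    using der s by auto
  from Taylor_down[OF N d0 this, of 0] sn obtain t where "s < t" "t < 0"
    "g s = (\<Sum>m<N. diff m 0 / fact m * (s - 0)^m) + diff N t / fact N * (s - 0)^N" by auto
  then show ?thesis by (intro exI[of _ t]) auto
qed

lemma poly_part:
  assumes "\<epsilon> \<noteq> 0"
  shows "(1/\<epsilon>) * (\<Sum>k=1..n. interp_coeff n k *
      ((\<Sum>m<2*n+1. a m * (real k*\<epsilon>)^m) - (\<Sum>m<2*n+1. a m * (-(real k*\<epsilon>))^m))) = (if n = 0 then 0 else a 1)"
proof -
  have "(\<Sum>k=1..n. interp_coeff n k *
      ((\<Sum>m<2*n+1. a m * (real k*\<epsilon>)^m) - (\<Sum>m<2*n+1. a m * (-(real k*\<epsilon>))^m)))
     = (\<Sum>k=1..n. \<Sum>m<2*n+1. a m * \<epsilon>^m * (interp_coeff n k * (real k ^ m - (- real k) ^ m)))"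
  proof -
    have e: "(-(real k*\<epsilon>))^m = \<epsilon>^m * (- real k)^m" for k m
      by (metis minus_mult_left mult.commute power_mult_distrib)
    show ?thesis unfolding e
      by (auto intro!: sum.cong simp: sum_subtractf[symmetric] sum_distrib_left power_mult_distrib algebra_simps)
  qed
  also have "\<dots> = (\<Sum>m<2*n+1. a m * \<epsilon>^m * (\<Sum>k=1..n. interp_coeff n k * (real k ^ m - (- real k) ^ m)))"
    by (subst sum.swap) (simp add: sum_distrib_left)
  also have "\<dots> = (\<Sum>m<2*n+1. if m = 1 then a m * \<epsilon>^m else 0)"
  proof (rule sum.cong[OF refl])
    fix m assume "m \<in> {..<2*n+1}"
    then have "m \<le> 2*n" by auto
    from coeff_identity2[OF this] show "a m * \<epsilon>^m * (\<Sum>k=1..n. interp_coeff n k * (real k ^ m - (- real k) ^ m))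
       = (if m = 1 then a m * \<epsilon>^m else 0)" by simp
  qed
  also have "\<dots> = (if n = 0 then 0 else a 1 * \<epsilon>)"
    by (simp add: sum.delta)
  finally show ?thesis using assms by simp
qed



theorem mainTheorem5:
  fixes D :: "'a::euclidean_space set" and Y :: "'a \<Rightarrow> 'a"
    and Phi :: "real \<Rightarrow> 'a \<Rightarrow> 'a" and Omega :: "(real \<times> 'a) set" and n :: nat
  assumes "open D" and "smooth_on D Y" and "is_flow Y D Phi Omega"
  shows "\<forall>K. compact K \<and> K \<subseteq> D \<longrightarrow>
           (\<exists>C \<epsilon>0. \<epsilon>0 > 0 \<and>
              (\<forall>\<epsilon> x. 0 < \<bar>\<epsilon>\<bar> \<and> \<bar>\<epsilon>\<bar> < \<epsilon>0 \<and> x \<in> K \<longrightarrow>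
                 (\<forall>k::int. \<bar>k\<bar> \<le> int n \<longrightarrow> (real_of_int k * \<epsilon>, x) \<in> Omega) \<and>
                 norm (Y x - interp_field Phi n x \<epsilon>) \<le> C * \<bar>\<epsilon>\<bar> ^ (2 * n)))"
proof (intro allI impI)
  fix K assume "compact K \<and> K \<subseteq> D"
  then have K: "compact K" and KD: "K \<subseteq> D" by auto
  note oD = assms(1) and sm = assms(2) and fl = assms(3)
  have Phi0: "Phi 0 x = x" if "x \<in> D" for x using fl that unfolding is_flow_def by auto
  have contF: "continuous_on D (Fs Y j)" for j
    using smooth_Fs[OF oD sm, of j] unfolding smooth_on_def by (metis Ck_on.simps(1))
  have bnd: "\<exists>M. \<forall>y\<in>S. norm (Fs Y j y) \<le> M" if "compact S" "S \<subseteq> D" for S j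
  proof -
    have "compact (Fs Y j ` S)"
      by (rule compact_continuous_image[OF continuous_on_subset[OF contF that(2)] that(1)])
    then have "bounded (Fs Y j ` S)" by (rule compact_imp_bounded)
    then show ?thesis unfolding bounded_iff by auto
  qed
  show "\<exists>C \<epsilon>0. \<epsilon>0 > 0 \<and>
              (\<forall>\<epsilon> x. 0 < \<bar>\<epsilon>\<bar> \<and> \<bar>\<epsilon>\<bar> < \<epsilon>0 \<and> x \<in> K \<longrightarrow>
                 (\<forall>k::int. \<bar>k\<bar> \<le> int n \<longrightarrow> (real_of_int k * \<epsilon>, x) \<in> Omega) \<and>
                 norm (Y x - interp_field Phi n x \<epsilon>) \<le> C * \<bar>\<epsilon>\<bar> ^ (2 * n))"
  proof (cases "n = 0")
    case True
    obtain M0 where M0: "\<forall>y\<in>K. norm (Fs Y 1 y) \<le> M0" using bnd[OF K KD] by blast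
    show ?thesis
    proof (intro exI conjI allI impI)
      show "(0::real) < 1" by simp
      fix \<epsilon> :: real and x assume h: "0 < \<bar>\<epsilon>\<bar> \<and> \<bar>\<epsilon>\<bar> < 1 \<and> x \<in> K"
      show "norm (Y x - interp_field Phi n x \<epsilon>) \<le> M0 * \<bar>\<epsilon>\<bar> ^ (2 * n)"
        using M0 h True Fs_1[of Y] by (simp add: interp_field_def)
      fix k :: int assume "\<bar>k\<bar> \<le> int n"
      then have "k = 0" using True by simp
      then show "(real_of_int k * \<epsilon>, x) \<in> Omega" using fl h KD unfolding is_flow_def by auto
    qed
  next
    case False
    then have n1: "n \<ge> 1" by simp
    obtain r where r: "r > 0" "(\<Union>x\<in>K. cball x r) \<subseteq> D"
      using compact_subset_open_imp_cball_epsilon_subset[OF K oD KD] by blast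
    define L where "L = (\<Union>x\<in>K. cball x r)"
    have eqL: "L = {x + y | x y. x \<in> K \<and> y \<in> cball 0 r}"
      unfolding L_def
    proof (intro equalityI subsetI)
      fix z assume "z \<in> (\<Union>x\<in>K. cball x r)"
      then obtain x where "x \<in> K" "z \<in> cball x r" by auto
      then show "z \<in> {x + y | x y. x \<in> K \<and> y \<in> cball 0 r}"
        by (intro CollectI exI[of _ x] exI[of _ "z - x"]) (auto simp: dist_norm norm_minus_commute)
    next
      fix z assume "z \<in> {x + y | x y. x \<in> K \<and> y \<in> cball 0 r}"
      then show "z \<in> (\<Union>x\<in>K. cball x r)" by (force simp: dist_norm)
    qed
    have cL: "compact L" unfolding eqL by (rule compact_sums[OF K compact_cball])
    have LD: "L \<subseteq> D" using r L_def by simp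
    obtain M0 where M0: "\<forall>y\<in>L. norm (Fs Y 1 y) \<le> M0" using bnd[OF cL LD] by blast
    obtain B0 where B0: "\<forall>y\<in>L. norm (Fs Y (2*n+1) y) \<le> B0" using bnd[OF cL LD] by blast
    define M where "M = max M0 1"
    define B where "B = max B0 0"
    have Mpos: "M > 0" and MY: "\<And>y. y \<in> L \<Longrightarrow> norm (Y y) \<le> M"
      using M0 Fs_1[of Y] unfolding M_def by force+
    have Bpos: "B \<ge> 0" and BF: "\<And>y. y \<in> L \<Longrightarrow> norm (Fs Y (2*n+1) y) \<le> B"
      using B0 unfolding B_def by force+
    obtain \<eta> where eta: "\<eta> > 0" "\<And>x t. x \<in> K \<Longrightarrow> \<bar>t\<bar> < \<eta> \<Longrightarrow> (t, x) \<in> Omega"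
      using tube[OF fl K KD] by blast
    define \<delta> where "\<delta> = min (\<eta>/2) (r/(2*M))"
    have dpos: "\<delta> > 0" using eta r Mpos by (simp add: \<delta>_def)
    define N where "N = 2*n+1"
    define C1 where "C1 = (\<Sum>k=1..n. \<bar>interp_coeff n k\<bar> * (2 * B * real k ^ N / fact N))"
    show ?thesis
    proof (intro exI conjI allI impI)
      show "\<delta> / real n > 0" using dpos n1 by simp
      fix \<epsilon> :: real and x assume h: "0 < \<bar>\<epsilon>\<bar> \<and> \<bar>\<epsilon>\<bar> < \<delta> / real n \<and> x \<in> K"
      then have eps0: "\<epsilon> \<noteq> 0" and xK: "x \<in> K" and R: "real n * \<bar>\<epsilon>\<bar> < \<delta>"
        using n1 by (auto simp: field_simps)
      have xD: "x \<in> D" using xK KD by auto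
      have Om: "(t, x) \<in> Omega" if "\<bar>t\<bar> \<le> real n * \<bar>\<epsilon>\<bar>" for t
        using eta(2)[OF xK] that R \<delta>_def by auto
      have inL: "Phi t x \<in> L" if "\<bar>t\<bar> \<le> real n * \<bar>\<epsilon>\<bar>" for t
      proof -
        have cb: "cball x r \<subseteq> L" using xK L_def by auto
        have "M * \<bar>t\<bar> \<le> M * (real n * \<bar>\<epsilon>\<bar>)" using that Mpos by simp
        also have "\<dots> < M * \<delta>" using R Mpos by simp
        also have "\<dots> \<le> M * (r / (2*M))"
          using Mpos by (intro mult_left_mono) (auto simp: \<delta>_def)
        also have "\<dots> < r" using Mpos r by simp
        finally have Mt: "M * \<bar>t\<bar> < r" .
        have m1: "\<And>y. y \<in> cball x r \<Longrightarrow> norm (Y y) \<le> M" using MY cb by blast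
        have m2: "\<And>s. \<bar>s\<bar> \<le> \<bar>t\<bar> \<Longrightarrow> (s, x) \<in> Omega" using Om that by auto
        have "norm (Phi t x - x) < r" by (rule stay[OF fl r(1) m1 m2 Mt xD])
        then show ?thesis using cb by (auto simp: dist_norm norm_minus_commute)
      qed
      show "(real_of_int k * \<epsilon>, x) \<in> Omega" if "\<bar>k\<bar> \<le> int n" for k
      proof (rule Om)
        have "\<bar>real_of_int k\<bar> \<le> real n" using that by linarith
        then show "\<bar>real_of_int k * \<epsilon>\<bar> \<le> real n * \<bar>\<epsilon>\<bar>" by (simp add: abs_mult mult_right_mono)
      qed
      have comp: "\<bar>(Y x - interp_field Phi n x \<epsilon>) \<bullet> b\<bar> \<le> C1 * \<bar>\<epsilon>\<bar> ^ (2*n)" if b: "b \<in> Basis" for b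
      proof -
        define diff where "diff m t = Fs Y m (Phi t x) \<bullet> b" for m t
        define g where "g t = Phi t x \<bullet> b" for t
        have d0: "diff 0 = g" by (simp add: diff_def g_def fun_eq_iff)
        have der: "DERIV (diff m) t :> diff (Suc m) t" if "m < N" "\<bar>t\<bar> \<le> real n * \<bar>\<epsilon>\<bar>" for m t
        proof -
          have "((\<lambda>s. Fs Y m (Phi s x)) has_vector_derivative Fs Y (Suc m) (Phi t x)) (at t)"
            by (rule Fs_time_deriv[OF oD sm fl Om[OF that(2)]])
          from bounded_linear.has_vector_derivative[OF bounded_linear_inner_left this, of b]
          show ?thesis unfolding diff_def has_real_derivative_iff_has_vector_derivative .
        qed
        define P where "P s = (\<Sum>m<N. diff m 0 / fact m * s^m)" for s
        define E where "E s = g s - P s" for s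
        have Eb: "\<bar>E s\<bar> \<le> B * \<bar>s\<bar>^N / fact N" if "s \<noteq> 0" "\<bar>s\<bar> \<le> real n * \<bar>\<epsilon>\<bar>" for s
        proof -
          have Npos: "N > 0" unfolding N_def by simp
          have "\<exists>\<tau>. \<bar>\<tau>\<bar> \<le> \<bar>s\<bar> \<and> g s = (\<Sum>m<N. diff m 0 / fact m * s^m) + diff N \<tau> / fact N * s^N"
            by (rule taylor2[OF Npos d0 der that])
          then obtain \<tau> where tau: "\<bar>\<tau>\<bar> \<le> \<bar>s\<bar>" "g s = P s + diff N \<tau> / fact N * s^N"
            unfolding P_def by blast
          have "\<bar>diff N \<tau>\<bar> \<le> norm (Fs Y N (Phi \<tau> x))" unfolding diff_def using Basis_le_norm[OF b] by blast
          also have "\<dots> \<le> B" using BF inL tau(1) that(2) unfolding N_def by force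
          finally have "\<bar>diff N \<tau>\<bar> \<le> B" .
          then have "\<bar>diff N \<tau>\<bar> * \<bar>s\<bar>^N \<le> B * \<bar>s\<bar>^N" by (simp add: mult_right_mono)
          then show ?thesis using tau(2) unfolding E_def by (simp add: abs_mult power_abs divide_right_mono)
        qed
        have ib: "interp_field Phi n x \<epsilon> \<bullet> b = (1/\<epsilon>) * (\<Sum>k=1..n. interp_coeff n k * (g (real k * \<epsilon>) - g (- (real k * \<epsilon>))))"
          unfolding interp_field_def g_def by (simp add: inner_sum_left inner_diff_left)
        have pp: "(1/\<epsilon>) * (\<Sum>k=1..n. interp_coeff n k * (P (real k * \<epsilon>) - P (- (real k * \<epsilon>)))) = Y x \<bullet> b"
          using poly_part[OF eps0, of n "\<lambda>m. diff m 0 / fact m"] False Phi0[OF xD] Fs_1[of Y]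
          unfolding P_def N_def diff_def by simp
        define S where "S = (\<Sum>k=1..n. interp_coeff n k * (E (real k * \<epsilon>) - E (- (real k * \<epsilon>))))"
        have gsum: "(\<Sum>k=1..n. interp_coeff n k * (g (real k * \<epsilon>) - g (- (real k * \<epsilon>))))
           = (\<Sum>k=1..n. interp_coeff n k * (P (real k * \<epsilon>) - P (- (real k * \<epsilon>)))) + S"
          unfolding S_def E_def by (simp add: sum.distrib[symmetric] algebra_simps)
        have split: "(Y x - interp_field Phi n x \<epsilon>) \<bullet> b = - ((1/\<epsilon>) * S)"
          unfolding inner_diff_left ib gsum distrib_left pp by simp
        have "\<bar>S\<bar> \<le> (\<Sum>k=1..n. \<bar>interp_coeff n k\<bar> * (\<bar>E (real k * \<epsilon>)\<bar> + \<bar>E (- (real k * \<epsilon>))\<bar>))"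
          unfolding S_def by (rule order_trans[OF sum_abs]) (auto intro!: sum_mono simp: abs_mult mult_left_mono)
        also have "\<dots> \<le> (\<Sum>k=1..n. \<bar>interp_coeff n k\<bar> * (2 * B * (real k * \<bar>\<epsilon>\<bar>)^N / fact N))"
        proof (rule sum_mono)
          fix k assume k: "k \<in> {1..n}"
          have ne: "real k * \<epsilon> \<noteq> 0" using k eps0 by auto
          have le: "\<bar>real k * \<epsilon>\<bar> \<le> real n * \<bar>\<epsilon>\<bar>" using k by (auto simp: abs_mult intro: mult_right_mono)
          have "\<bar>E (real k * \<epsilon>)\<bar> + \<bar>E (- (real k * \<epsilon>))\<bar> \<le> B * \<bar>real k * \<epsilon>\<bar>^N / fact N + B * \<bar>real k * \<epsilon>\<bar>^N / fact N"
            using Eb[OF ne le] Eb[of "- (real k * \<epsilon>)"] ne le by (intro add_mono) auto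
          also have "\<dots> = 2 * B * (real k * \<bar>\<epsilon>\<bar>)^N / fact N" by (simp add: abs_mult)
          finally show "\<bar>interp_coeff n k\<bar> * (\<bar>E (real k * \<epsilon>)\<bar> + \<bar>E (- (real k * \<epsilon>))\<bar>)
              \<le> \<bar>interp_coeff n k\<bar> * (2 * B * (real k * \<bar>\<epsilon>\<bar>)^N / fact N)"
            by (rule mult_left_mono) simp
        qed
        also have "\<dots> = C1 * \<bar>\<epsilon>\<bar>^N"
          unfolding C1_def sum_distrib_right
          by (rule sum.cong[OF refl]) (simp add: power_mult_distrib)
        finally have Sb: "\<bar>S\<bar> \<le> C1 * \<bar>\<epsilon>\<bar>^N" .
        have "\<bar>(Y x - interp_field Phi n x \<epsilon>) \<bullet> b\<bar> = \<bar>S\<bar> / \<bar>\<epsilon>\<bar>"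
          unfolding split by (simp add: abs_mult)
        also have "\<dots> \<le> C1 * \<bar>\<epsilon>\<bar>^N / \<bar>\<epsilon>\<bar>" using Sb by (simp add: divide_right_mono)
        also have "\<dots> = C1 * \<bar>\<epsilon>\<bar>^(2*n)" using eps0 unfolding N_def by simp
        finally show ?thesis .
      qed
      have "norm (Y x - interp_field Phi n x \<epsilon>) \<le> (\<Sum>b\<in>Basis. \<bar>(Y x - interp_field Phi n x \<epsilon>) \<bullet> b\<bar>)"
        by (rule norm_le_l1)
      also have "\<dots> \<le> (\<Sum>b\<in>(Basis::'a set). C1 * \<bar>\<epsilon>\<bar> ^ (2*n))" by (rule sum_mono) (rule comp)
      also have "\<dots> = (real DIM('a) * C1) * \<bar>\<epsilon>\<bar> ^ (2*n)" by simp
      finally show "norm (Y x - interp_field Phi n x \<epsilon>) \<le> (real DIM('a) * C1) * \<bar>\<epsilon>\<bar> ^ (2*n)" .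
    qed
  qed
qed

end
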